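(* Let $f:[0,\infty)\rightarrow\mathbb{R}$ be a continuous function which is $3$-convex, nondecreasing and concave. Then \[ f(|A|)+f(|B|)+f(|C|)+f(|A+B+C|)\geq f(|A+B|)+f(|B+C|)+f(|C+A|)+f(0)I_n \] in the Löwner order, whenever $A,B,C$ are real symmetric $n\times n$ matrices that commute with each other.
   Context: For a real symmetric matrix $A$, $|A|=(A^2)^{1/2}$ is its modulus (a positive semidefinite matrix), and for a positive semidefinite matrix $M=U\operatorname{diag}(\lambda_1,\dots,\lambda_n)U^{T}$ with $U$ orthogonal, $f(M)=U\operatorname{diag}(f(\lambda_1),\dots,f(\lambda_n))U^{T}$. $I_n$ is the $n\times n$ identity matrix. The Löwner order: $X\leq Y$ iff $\langle X\mathbf{x},\mathbf{x}\rangle\leq\langle Y\mathbf{x},\mathbf{x}\rangle$ for all $\mathbf{x}\in\mathbb{R}^n$. A real function $f$ on an interval is $3$-convex if for all $x_0<x_1<x_2<x_3$ in the interval, $\sum_{j=0}^{3}\frac{f(x_j)}{\prod_{k\neq j}(x_j-x_k)}\geq0$. *)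

theory Defs
  imports "HOL-Analysis.Analysis"
begin

definition diagm :: "('n::finite \<Rightarrow> real) \<Rightarrow> real^'n^'n" where
  "diagm l = (\<chi> i j. if i = j then l i else 0)"

definition matfun :: "(real \<Rightarrow> real) \<Rightarrow> real^'n^'n \<Rightarrow> real^'n^'n" where
  "matfun f M = (SOME X. \<exists>U l. orthogonal_matrix U \<and>
      M = U ** diagm l ** transpose U \<and> X = U ** diagm (\<lambda>i. f (l i)) ** transpose U)"

definition matabs :: "real^'n^'n \<Rightarrow> real^'n^'n" where
  "matabs A = matfun sqrt (A ** A)"

definition loewner_le :: "real^'n^'n \<Rightarrow> real^'n^'n \<Rightarrow> bool" where
  "loewner_le X Y \<longleftrightarrow> (\<forall>x::real^'n. (X *v x) \<bullet> x \<le> (Y *v x) \<bullet> x)"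

definition symmetric_matrix :: "real^'n^'n \<Rightarrow> bool" where
  "symmetric_matrix A \<longleftrightarrow> transpose A = A"

definition three_convex_on :: "real set \<Rightarrow> (real \<Rightarrow> real) \<Rightarrow> bool" where
  "three_convex_on S f \<longleftrightarrow> (\<forall>x0 x1 x2 x3. x0 \<in> S \<and> x1 \<in> S \<and> x2 \<in> S \<and> x3 \<in> S \<and>
      x0 < x1 \<and> x1 < x2 \<and> x2 < x3 \<longrightarrow>
      0 \<le> f x0 / ((x0 - x1) * (x0 - x2) * (x0 - x3))
         + f x1 / ((x1 - x0) * (x1 - x2) * (x1 - x3))
         + f x2 / ((x2 - x0) * (x2 - x1) * (x2 - x3))
         + f x3 / ((x3 - x0) * (x3 - x1) * (x3 - x2)))"

end

theory Submission
  imports Defs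
begin


lemma id_all:
  fixes x0 x1 x2 x3 y0 y1 y2 y3 :: real
  assumes "x0 < x1" "x1 < x2" "x2 < x3"
  defines "Q \<equiv> y0 / ((x0 - x1) * (x0 - x2) * (x0 - x3))
         + y1 / ((x1 - x0) * (x1 - x2) * (x1 - x3))
         + y2 / ((x2 - x0) * (x2 - x1) * (x2 - x3))
         + y3 / ((x3 - x0) * (x3 - x1) * (x3 - x2))"
  shows "(y0/((x0-x1)*(x0-x3)) + y1/((x1-x0)*(x1-x3)) + y3/((x3-x0)*(x3-x1)))
   - (y0/((x0-x1)*(x0-x2)) + y1/((x1-x0)*(x1-x2)) + y2/((x2-x0)*(x2-x1)))
   = (x3 - x2) * Q"
  and "(y0/((x0-x2)*(x0-x3)) + y2/((x2-x0)*(x2-x3)) + y3/((x3-x0)*(x3-x2)))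
   - (y0/((x0-x1)*(x0-x3)) + y1/((x1-x0)*(x1-x3)) + y3/((x3-x0)*(x3-x1)))
   = (x2 - x1) * Q"
  and "(y1/((x1-x2)*(x1-x3)) + y2/((x2-x1)*(x2-x3)) + y3/((x3-x1)*(x3-x2)))
   - (y0/((x0-x2)*(x0-x3)) + y2/((x2-x0)*(x2-x3)) + y3/((x3-x0)*(x3-x2)))
   = (x1 - x0) * Q"
proof -
  have L1: "\<And>a b c y::real. b\<noteq>0 \<Longrightarrow> y/(a*c) = y*b*(1/(a*b*c))" by (simp add: divide_simps)
  have L2: "\<And>a b c y::real. c\<noteq>0 \<Longrightarrow> y/(a*b) = y*c*(1/(a*b*c))" by simp
  have L3: "\<And>a b c y::real. a\<noteq>0 \<Longrightarrow> y/(b*c) = y*a*(1/(a*b*c))" by simp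
  have L0: "\<And>d y::real. y/d = y*(1/d)" by simp
  have n: "x0-x1\<noteq>0" "x0-x2\<noteq>0" "x0-x3\<noteq>0" "x1-x2\<noteq>0" "x1-x3\<noteq>0" "x2-x3\<noteq>0" "x1-x0\<noteq>0" "x2-x0\<noteq>0" "x3-x0\<noteq>0" "x2-x1\<noteq>0" "x3-x1\<noteq>0" "x3-x2\<noteq>0" using assms by auto
  define u0 where "u0 = 1/((x0 - x1) * (x0 - x2) * (x0 - x3))"
  define u1 where "u1 = 1/((x1 - x0) * (x1 - x2) * (x1 - x3))"
  define u2 where "u2 = 1/((x2 - x0) * (x2 - x1) * (x2 - x3))"
  define u3 where "u3 = 1/((x3 - x0) * (x3 - x1) * (x3 - x2))"
  have Q: "Q = y0*u0+y1*u1+y2*u2+y3*u3" unfolding Q_def u0_def u1_def u2_def u3_def by simp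
  have a0: "y0/((x0-x1)*(x0-x3)) = y0*(x0-x2)*u0" "y0/((x0-x1)*(x0-x2)) = y0*(x0-x3)*u0"
     "y0/((x0-x2)*(x0-x3)) = y0*(x0-x1)*u0"
    unfolding u0_def by (rule L1[OF n(2)], rule L2[OF n(3)], rule L3[OF n(1)])
  have a1: "y1/((x1-x0)*(x1-x3)) = y1*(x1-x2)*u1" "y1/((x1-x0)*(x1-x2)) = y1*(x1-x3)*u1"
     "y1/((x1-x2)*(x1-x3)) = y1*(x1-x0)*u1"
    unfolding u1_def by (rule L1[OF n(4)], rule L2[OF n(5)], rule L3[OF n(7)])
  have a2: "y2/((x2-x0)*(x2-x1)) = y2*(x2-x3)*u2" "y2/((x2-x0)*(x2-x3)) = y2*(x2-x1)*u2"
     "y2/((x2-x1)*(x2-x3)) = y2*(x2-x0)*u2"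
    unfolding u2_def by (rule L2[OF n(6)], rule L1[OF n(10)], rule L3[OF n(8)])
  have a3: "y3/((x3-x0)*(x3-x1)) = y3*(x3-x2)*u3" "y3/((x3-x0)*(x3-x2)) = y3*(x3-x1)*u3"
     "y3/((x3-x1)*(x3-x2)) = y3*(x3-x0)*u3"
    unfolding u3_def by (rule L2[OF n(12)], rule L1[OF n(11)], rule L3[OF n(9)])
  show "(y0/((x0-x1)*(x0-x3)) + y1/((x1-x0)*(x1-x3)) + y3/((x3-x0)*(x3-x1)))
   - (y0/((x0-x1)*(x0-x2)) + y1/((x1-x0)*(x1-x2)) + y2/((x2-x0)*(x2-x1)))
   = (x3 - x2) * Q" unfolding a0 a1 a2 a3 Q by (simp add: algebra_simps)
  show "(y0/((x0-x2)*(x0-x3)) + y2/((x2-x0)*(x2-x3)) + y3/((x3-x0)*(x3-x2)))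
   - (y0/((x0-x1)*(x0-x3)) + y1/((x1-x0)*(x1-x3)) + y3/((x3-x0)*(x3-x1)))
   = (x2 - x1) * Q" unfolding a0 a1 a2 a3 Q by (simp add: algebra_simps)
  show "(y1/((x1-x2)*(x1-x3)) + y2/((x2-x1)*(x2-x3)) + y3/((x3-x1)*(x3-x2)))
   - (y0/((x0-x2)*(x0-x3)) + y2/((x2-x0)*(x2-x3)) + y3/((x3-x0)*(x3-x2)))
   = (x1 - x0) * Q" unfolding a0 a1 a2 a3 Q by (simp add: algebra_simps)
qed

definition D3 :: "(real \<Rightarrow> real) \<Rightarrow> real \<Rightarrow> real \<Rightarrow> real \<Rightarrow> real" where
 "D3 f p q r = f p/((p-q)*(p-r)) + f q/((q-p)*(q-r)) + f r/((r-p)*(r-q))"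

lemma tc_steps:
  assumes tc: "three_convex_on {0..} f" and "0 \<le> x0" "x0 < x1" "x1 < x2" "x2 < x3"
  shows "D3 f x0 x1 x2 \<le> D3 f x0 x1 x3" "D3 f x0 x1 x3 \<le> D3 f x0 x2 x3" "D3 f x0 x2 x3 \<le> D3 f x1 x2 x3"
proof -
  let ?Q = "f x0 / ((x0 - x1) * (x0 - x2) * (x0 - x3))
         + f x1 / ((x1 - x0) * (x1 - x2) * (x1 - x3))
         + f x2 / ((x2 - x0) * (x2 - x1) * (x2 - x3))
         + f x3 / ((x3 - x0) * (x3 - x1) * (x3 - x2))"
  have Q: "0 \<le> ?Q" using tc assms(2-) unfolding three_convex_on_def by auto
  note ids = id_all[OF assms(3-5), of "f x0" "f x1" "f x3" "f x2"]
  have e1: "D3 f x0 x1 x3 - D3 f x0 x1 x2 = (x3-x2)*?Q" unfolding D3_def by (rule id_all(1)[OF assms(3-5)])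
  have e2: "D3 f x0 x2 x3 - D3 f x0 x1 x3 = (x2-x1)*?Q" unfolding D3_def by (rule id_all(2)[OF assms(3-5)])
  have e3: "D3 f x1 x2 x3 - D3 f x0 x2 x3 = (x1-x0)*?Q" unfolding D3_def by (rule id_all(3)[OF assms(3-5)])
  have "0 \<le> (x3-x2)*?Q" "0 \<le> (x2-x1)*?Q" "0 \<le> (x1-x0)*?Q" using Q assms by simp_all
  then show "D3 f x0 x1 x2 \<le> D3 f x0 x1 x3" "D3 f x0 x1 x3 \<le> D3 f x0 x2 x3" "D3 f x0 x2 x3 \<le> D3 f x1 x2 x3"
    using e1 e2 e3 by linarith+
qed

lemma D3_shift:
  assumes tc: "three_convex_on {0..} f" and "0 \<le> p" "p < q" "q < r" "0 \<le> t"
  shows "D3 f p q r \<le> D3 f (p+t) (q+t) (r+t)"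
proof (cases "t = 0")
  case True then show ?thesis by simp
next
  case False
  then have t: "t > 0" using assms by simp
  have "D3 f p q r \<le> D3 f p q (r+t)" using tc_steps(1)[OF tc, of p q r "r+t"] assms t by simp
  also have "\<dots> \<le> D3 f p (q+t) (r+t)" using tc_steps(2)[OF tc, of p q "q+t" "r+t"] assms t by simp
  also have "\<dots> \<le> D3 f (p+t) (q+t) (r+t)" using tc_steps(3)[OF tc, of p "p+t" "q+t" "r+t"] assms t by simp
  finally show ?thesis .
qed

lemma E_eq1:
  fixes b :: real assumes "b > 0"
  shows "f (x+b+b) - f (x+b) - f (x+b) + f x = 2*b^2 * D3 f x (x+b) (x+b+b)"
proof -
  have d: "x-(x+b) = -b" "x-(x+b+b) = -(2*b)" "x+b-x = b" "x+b-(x+b+b) = -b" "x+b+b-x = 2*b" "x+b+b-(x+b) = b"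
    by simp_all
  have "D3 f x (x+b) (x+b+b) = (f x - 2*f(x+b) + f(x+b+b)) / (2*b^2)"
    unfolding D3_def d using assms by (simp add: field_simps power2_eq_square)
  then show ?thesis using assms by simp
qed

lemma E_eq2:
  fixes b c :: real assumes "0 < b" "b < c"
  shows "f (x+b+c) - f (x+b) - f (x+c) + f x = b*c*(D3 f (x+b) (x+c) (x+b+c) + D3 f x (x+b) (x+c))"
proof -
  have n: "b \<noteq> 0" "c \<noteq> 0" "b - c \<noteq> 0" "c - b \<noteq> 0" using assms by auto
  define k where "k = b - c"
  have k: "k \<noteq> 0" "c - b = -k" using assms unfolding k_def by auto
  have d: "x+b-(x+c) = k" "x+b-(x+b+c) = -c" "x+c-(x+b) = -k" "x+c-(x+b+c) = -b" "x+b+c-(x+b) = c" "x+b+c-(x+c) = b"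
     "x-(x+b) = -b" "x-(x+c) = -c" "x+b-x = b" "x+c-x = c"
    unfolding k_def by simp_all
  have hi: "D3 f (x+b) (x+c) (x+b+c) = (-b*f(x+b) + c*f(x+c) + k*f(x+b+c))/(b*c*k)"
    unfolding D3_def d using n k by (simp add: field_simps)
  have lo: "D3 f x (x+b) (x+c) = (k*f x + c*f(x+b) - b*f(x+c))/(b*c*k)"
    unfolding D3_def d using n k by (simp add: field_simps)
  have "b*c*(D3 f (x+b) (x+c) (x+b+c) + D3 f x (x+b) (x+c))
      = (-b*f(x+b) + c*f(x+c) + k*f(x+b+c) + (k*f x + c*f(x+b) - b*f(x+c)))/k"
    unfolding hi lo using n k by (simp add: field_simps)
  also have "\<dots> = (k*(f (x+b+c) - f (x+b) - f (x+c) + f x))/k"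
    unfolding k_def by (simp add: algebra_simps)
  finally show ?thesis using k by simp
qed

definition Ef :: "(real \<Rightarrow> real) \<Rightarrow> real \<Rightarrow> real \<Rightarrow> real \<Rightarrow> real" where
  "Ef f x b c = f (x+b+c) - f (x+b) - f (x+c) + f x"

lemma D3_shift':
  assumes tc: "three_convex_on {0..} f" and "0 \<le> p" "p < q" "q < r" "p \<le> p'"
  shows "D3 f p q r \<le> D3 f p' (q + (p'-p)) (r + (p'-p))"
  using D3_shift[OF tc assms(2-4), of "p'-p"] assms by simp

lemma E_mono_lt:
  assumes tc: "three_convex_on {0..} f" and "0 \<le> x" "x \<le> x'" "0 < b" "b < c"
  shows "Ef f x b c \<le> Ef f x' b c"
proof -
  have 1: "D3 f (x+b) (x+c) (x+b+c) \<le> D3 f (x'+b) (x'+c) (x'+b+c)"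
    using D3_shift'[OF tc, of "x+b" "x+c" "x+b+c" "x'+b"] assms by (simp add: algebra_simps)
  have 2: "D3 f x (x+b) (x+c) \<le> D3 f x' (x'+b) (x'+c)"
    using D3_shift'[OF tc, of "x" "x+b" "x+c" "x'"] assms by (simp add: algebra_simps)
  have "b*c > 0" using assms by simp
  then show ?thesis unfolding Ef_def E_eq2[OF assms(4,5), of f x] E_eq2[OF assms(4,5), of f x']
    using 1 2 by (simp add: mult_left_mono)
qed

lemma E_mono:
  assumes tc: "three_convex_on {0..} f" and "0 \<le> x" "x \<le> x'" "0 \<le> b" "0 \<le> c"
  shows "Ef f x b c \<le> Ef f x' b c"
proof -
  have sym: "Ef f y b c = Ef f y c b" for y unfolding Ef_def by (simp add: add_ac)
  consider "b = 0" | "c = 0" | "0 < b" "b < c" | "0 < c" "c < b" | "0 < b" "b = c" using assms by linarith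
  then show ?thesis
  proof cases
    case 1 then show ?thesis by (simp add: Ef_def)
  next
    case 2 then show ?thesis by (simp add: Ef_def)
  next
    case 3 then show ?thesis using E_mono_lt[OF tc assms(2,3)] by simp
  next
    case 4 then show ?thesis using E_mono_lt[OF tc assms(2,3)] sym by simp
  next
    case 5
    have "D3 f x (x+b) (x+b+b) \<le> D3 f x' (x'+b) (x'+b+b)"
      using D3_shift'[OF tc, of "x" "x+b" "x+b+b" "x'"] assms 5 by (simp add: algebra_simps)
    moreover have "2*b^2 > 0" using 5 by simp
    ultimately show ?thesis unfolding Ef_def using 5 E_eq1[of b f x] E_eq1[of b f x']
      by (simp add: mult_left_mono)
  qed
qed

lemma P_ineq:
  assumes tc: "three_convex_on {0..} f" and "0 \<le> a" "0 \<le> b" "0 \<le> c"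
  shows "f (a+b) + f (b+c) + f (c+a) + f 0 \<le> f a + f b + f c + f (a+b+c)"
  using E_mono[OF tc order_refl assms(2) assms(3,4)] unfolding Ef_def by (simp add: add_ac)

lemma conc_ineq:
  fixes f :: "real \<Rightarrow> real" and x y h :: real
  assumes cc: "concave_on {0..} f" and "0 \<le> x" "x \<le> y" "0 \<le> h"
  shows "f x + f (y+h) \<le> f (x+h) + f y"
proof (cases "h = 0 \<or> x = y")
  case True then show ?thesis by auto
next
  case False
  then have h: "h > 0" "x < y" using assms by (auto simp: less_le)
  define L where "L = y - x + h"
  have L: "L > 0" using h unfolding L_def by simp
  have cv: "convex_on {0..} (\<lambda>z. - f z)" using cc unfolding concave_on_def by simp
  define t where "t = h/L"
  have t: "0 \<le> t" "t \<le> 1" "(y-x)/L = 1 - t" using L h unfolding t_def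
    by (simp_all add: field_simps) (simp_all add: L_def)
  have e1: "x + h = (1 - t) *\<^sub>R x + t *\<^sub>R (y+h)" using L unfolding t_def
    by (simp add: field_simps) (simp add: L_def algebra_simps)
  have e2: "y = (1 - (1-t)) *\<^sub>R x + (1-t) *\<^sub>R (y+h)" using L unfolding t_def
    by (simp add: field_simps) (simp add: L_def algebra_simps)
  have c1: "- f (x+h) \<le> (1-t) * (- f x) + t * (- f (y+h))"
    unfolding e1 apply (rule convex_onD[OF cv]) using assms t by auto
  have c2: "- f y \<le> (1-(1-t)) * (- f x) + (1-t) * (- f (y+h))"
    apply (subst e2) apply (rule convex_onD[OF cv]) using assms t by auto
  have "(1-t) * (- f x) + t * (- f (y+h)) + ((1-(1-t)) * (- f x) + (1-t) * (- f (y+h))) = - f x - f (y+h)"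
    by (simp add: algebra_simps)
  then show ?thesis using c1 c2 by linarith
qed

lemma M_ineq:
  fixes f :: "real \<Rightarrow> real" and a b d :: real
  assumes tc: "three_convex_on {0..} f" and mo: "mono_on {0..} f" and cc: "concave_on {0..} f"
    and a: "0 \<le> a" and b: "0 \<le> b" and d: "0 \<le> d"
  shows "f (a+b) + f \<bar>a-d\<bar> + f \<bar>b-d\<bar> + f 0 \<le> f a + f b + f d + f \<bar>a+b-d\<bar>"
proof -
  have m: "\<And>u v. 0 \<le> u \<Longrightarrow> u \<le> v \<Longrightarrow> f u \<le> f v"
    using mo by (auto intro: mono_onD)
  consider "a + b \<le> d" | "d \<le> a" "d \<le> b" | "a \<le> d" "d \<le> b" | "b \<le> d" "d \<le> a"
    | "a \<le> d" "b \<le> d" "d \<le> a + b" by linarith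
  then show ?thesis
  proof cases
    case 1
    have "Ef f 0 a b \<le> Ef f (d-a-b) a b" using E_mono[OF tc order_refl _ a b] 1 by simp
    moreover have "Ef f (d-a-b) a b = f d - f (d-b) - f (d-a) + f (d-a-b)"
      unfolding Ef_def by (simp add: algebra_simps)
    moreover have "Ef f 0 a b = f (a+b) - f a - f b + f 0" unfolding Ef_def by simp
    moreover have "\<bar>a-d\<bar> = d-a" "\<bar>b-d\<bar> = d-b" "\<bar>a+b-d\<bar> = d-a-b" using 1 a b by auto
    ultimately show ?thesis by (smt (verit))
  next
    case 2
    have "f (a-d) \<le> f a" "f (b-d) \<le> f b" using 2 d by (auto intro: m)
    moreover have "f 0 + f (a+b) \<le> f d + f (a+b-d)" using conc_ineq[OF cc, of 0 "a+b-d" d] 2 a b d by simp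
    moreover have "\<bar>a-d\<bar> = a-d" "\<bar>b-d\<bar> = b-d" "\<bar>a+b-d\<bar> = a+b-d" using 2 a b by auto
    ultimately show ?thesis by (smt (verit))
  next
    case 3
    have "f (d-a) \<le> f d" "f (b-d) \<le> f (a+b-d)" using 3 a by (auto intro: m)
    moreover have "f 0 + f (a+b) \<le> f a + f b" using conc_ineq[OF cc, of 0 b a] 3 a b d by (simp add: add_ac)
    moreover have "\<bar>a-d\<bar> = d-a" "\<bar>b-d\<bar> = b-d" "\<bar>a+b-d\<bar> = a+b-d" using 3 a b by auto
    ultimately show ?thesis by (smt (verit))
  next
    case 4
    have "f (d-b) \<le> f d" "f (a-d) \<le> f (a+b-d)" using 4 b by (auto intro: m)
    moreover have "f 0 + f (a+b) \<le> f b + f a" using conc_ineq[OF cc, of 0 a b] 4 a b d by (simp add: add_ac)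
    moreover have "\<bar>a-d\<bar> = a-d" "\<bar>b-d\<bar> = d-b" "\<bar>a+b-d\<bar> = a+b-d" using 4 a b by auto
    ultimately show ?thesis by (smt (verit))
  next
    case 5
    have "f (d-b) \<le> f a" "f (d-a) \<le> f b" using 5 a b by (auto intro: m)
    moreover have "f 0 + f (a+b) \<le> f (a+b-d) + f d" using conc_ineq[OF cc, of 0 d "a+b-d"] 5 a b d by simp
    moreover have "\<bar>a-d\<bar> = d-a" "\<bar>b-d\<bar> = d-b" "\<bar>a+b-d\<bar> = a+b-d" using 5 a b by auto
    ultimately show ?thesis by (smt (verit))
  qed
qed

lemma scalar_ineq:
  fixes f :: "real \<Rightarrow> real" and a b c :: real
  assumes tc: "three_convex_on {0..} f" and mo: "mono_on {0..} f" and cc: "concave_on {0..} f"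
  shows "f \<bar>a+b\<bar> + f \<bar>b+c\<bar> + f \<bar>c+a\<bar> + f 0 \<le> f \<bar>a\<bar> + f \<bar>b\<bar> + f \<bar>c\<bar> + f \<bar>a+b+c\<bar>"
proof -
  note M = M_ineq[OF tc mo cc]
  note P = P_ineq[OF tc]
  consider "0 \<le> a" "0 \<le> b" "0 \<le> c" | "a \<le> 0" "b \<le> 0" "c \<le> 0"
    | "0 \<le> a" "0 \<le> b" "c \<le> 0" | "0 \<le> a" "b \<le> 0" "0 \<le> c" | "a \<le> 0" "0 \<le> b" "0 \<le> c"
    | "a \<le> 0" "b \<le> 0" "0 \<le> c" | "a \<le> 0" "0 \<le> b" "c \<le> 0" | "0 \<le> a" "b \<le> 0" "c \<le> 0"
    by linarith
  then show ?thesis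
  proof cases
    case 1 then show ?thesis using P[of a b c] by (simp add: add_ac)
  next
    case 2
    have e: "\<bar>a+b\<bar> = -a + -b" "\<bar>b+c\<bar> = -b + -c" "\<bar>c+a\<bar> = -c + -a" "\<bar>a+b+c\<bar> = -a + -b + -c"
      "\<bar>a\<bar> = -a" "\<bar>b\<bar> = -b" "\<bar>c\<bar> = -c" using 2 by auto
    show ?thesis unfolding e using P[of "-a" "-b" "-c"] 2 by simp
  next
    case 3
    have e: "\<bar>a+b\<bar> = a+b" "\<bar>b+c\<bar> = \<bar>b - -c\<bar>" "\<bar>c+a\<bar> = \<bar>a - -c\<bar>" "\<bar>a+b+c\<bar> = \<bar>a+b - -c\<bar>"
      "\<bar>a\<bar> = a" "\<bar>b\<bar> = b" "\<bar>c\<bar> = -c" using 3 by auto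
    show ?thesis unfolding e using M[of a b "-c"] 3 by linarith
  next
    case 4
    have e: "\<bar>c+a\<bar> = a+c" "\<bar>b+c\<bar> = \<bar>c - -b\<bar>" "\<bar>a+b\<bar> = \<bar>a - -b\<bar>" "\<bar>a+b+c\<bar> = \<bar>a+c - -b\<bar>"
      "\<bar>a\<bar> = a" "\<bar>b\<bar> = -b" "\<bar>c\<bar> = c" using 4 by auto
    show ?thesis unfolding e using M[of a c "-b"] 4 by linarith
  next
    case 5
    have e: "\<bar>b+c\<bar> = b+c" "\<bar>a+b\<bar> = \<bar>b - -a\<bar>" "\<bar>c+a\<bar> = \<bar>c - -a\<bar>" "\<bar>a+b+c\<bar> = \<bar>b+c - -a\<bar>"
      "\<bar>a\<bar> = -a" "\<bar>b\<bar> = b" "\<bar>c\<bar> = c" using 5 by auto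
    show ?thesis unfolding e using M[of b c "-a"] 5 by linarith
  next
    case 6
    have e: "\<bar>a+b\<bar> = -a + -b" "\<bar>b+c\<bar> = \<bar>-b - c\<bar>" "\<bar>c+a\<bar> = \<bar>-a - c\<bar>" "\<bar>a+b+c\<bar> = \<bar>-a + -b - c\<bar>"
      "\<bar>a\<bar> = -a" "\<bar>b\<bar> = -b" "\<bar>c\<bar> = c" using 6 by auto
    show ?thesis unfolding e using M[of "-a" "-b" c] 6 by linarith
  next
    case 7
    have e: "\<bar>c+a\<bar> = -a + -c" "\<bar>a+b\<bar> = \<bar>-a - b\<bar>" "\<bar>b+c\<bar> = \<bar>-c - b\<bar>" "\<bar>a+b+c\<bar> = \<bar>-a + -c - b\<bar>"
      "\<bar>a\<bar> = -a" "\<bar>b\<bar> = b" "\<bar>c\<bar> = -c" using 7 by auto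
    show ?thesis unfolding e using M[of "-a" "-c" b] 7 by linarith
  next
    case 8
    have e: "\<bar>b+c\<bar> = -b + -c" "\<bar>a+b\<bar> = \<bar>-b - a\<bar>" "\<bar>c+a\<bar> = \<bar>-c - a\<bar>" "\<bar>a+b+c\<bar> = \<bar>-b + -c - a\<bar>"
      "\<bar>a\<bar> = a" "\<bar>b\<bar> = -b" "\<bar>c\<bar> = -c" using 8 by auto
    show ?thesis unfolding e using M[of "-b" "-c" a] 8 by linarith
  qed
qed


lemma sym_inner:
  fixes M :: "real^'n^'n"
  assumes "transpose M = M"
  shows "(M *v x) \<bullet> y = x \<bullet> (M *v y)"
proof -
  have "(M *v x) \<bullet> y = y \<bullet> (M *v x)" by (simp add: inner_commute)
  also have "\<dots> = (y v* M) \<bullet> x" by (simp add: dot_lmul_matrix)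
  also have "\<dots> = (transpose M *v y) \<bullet> x" by simp
  also have "\<dots> = x \<bullet> (M *v y)" using assms by (simp add: inner_commute)
  finally show ?thesis .
qed

lemma eigen_exists:
  fixes M :: "real^'n^'n"
  assumes sym: "transpose M = M" and S: "subspace S" and nz: "x0 \<in> S" "x0 \<noteq> 0"
    and inv: "\<And>x. x \<in> S \<Longrightarrow> M *v x \<in> S"
  shows "\<exists>v l. v \<in> S \<and> v \<noteq> 0 \<and> M *v v = l *\<^sub>R v"
proof -
  let ?q = "\<lambda>x. (M *v x) \<bullet> x"
  let ?K = "S \<inter> sphere 0 1"
  have K: "compact ?K" using closed_subspace[OF S] by (intro closed_Int_compact) auto
  have "x0 /\<^sub>R norm x0 \<in> ?K" using nz S by (auto simp: subspace_mul)
  then have Kne: "?K \<noteq> {}" by blast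
  have cont: "continuous_on ?K ?q"
    by (intro continuous_intros linear_continuous_on linear_conv_bounded_linear[THEN iffD1]) simp
  obtain v where v: "v \<in> ?K" and vmax: "\<And>y. y \<in> ?K \<Longrightarrow> ?q y \<le> ?q v"
    using continuous_attains_sup[OF K Kne cont] by blast
  define l where "l = ?q v"
  have vS: "v \<in> S" and nv: "norm v = 1" using v by auto
  have bound: "?q z \<le> l * (z \<bullet> z)" if "z \<in> S" for z
  proof (cases "z = 0")
    case True then show ?thesis by simp
  next
    case False
    then have "z /\<^sub>R norm z \<in> ?K" using that S by (auto simp: subspace_mul)
    then have "?q (z /\<^sub>R norm z) \<le> l" using vmax l_def by blast
    moreover have "?q (z /\<^sub>R norm z) = ?q z / (norm z)^2"
      by (simp add: matrix_vector_mult_scaleR power2_eq_square divide_inverse)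
    moreover have "norm z ^ 2 = z \<bullet> z" by (simp add: power2_norm_eq_inner)
    moreover have "norm z > 0" using False by simp
    ultimately show ?thesis by (simp add: divide_le_eq)
  qed
  define w where "w = M *v v - l *\<^sub>R v"
  have wS: "w \<in> S" unfolding w_def using S inv vS by (simp add: subspace_diff subspace_mul)
  have vv: "v \<bullet> v = 1" using nv by (simp add: norm_eq_1)
  have wv: "w \<bullet> v = 0" unfolding w_def l_def using vv by (simp add: inner_diff_left)
  have Mvw: "(M *v v) \<bullet> w = w \<bullet> w"
  proof -
    have "M *v v = w + l *\<^sub>R v" unfolding w_def by simp
    then show ?thesis using wv by (simp add: inner_add_left inner_add_right inner_commute)
  qed
  define N where "N = w \<bullet> w"
  define C where "C = l * N - ?q w"
  have key: "2 * s * N \<le> s^2 * C" for s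
  proof -
    have "v + s *\<^sub>R w \<in> S" using S vS wS by (simp add: subspace_add subspace_mul)
    then have b: "?q (v + s *\<^sub>R w) \<le> l * ((v + s *\<^sub>R w) \<bullet> (v + s *\<^sub>R w))" by (rule bound)
    have e1: "?q (v + s *\<^sub>R w) = l + 2 * s * N + s^2 * ?q w"
    proof -
      have "(M *v w) \<bullet> v = w \<bullet> (M *v v)" by (rule sym_inner[OF sym])
      then have "(M *v w) \<bullet> v = N" using Mvw unfolding N_def by (simp add: inner_commute)
      then show ?thesis using Mvw unfolding N_def l_def
        by (simp add: matrix_vector_right_distrib matrix_vector_mult_scaleR inner_add_left inner_add_right power2_eq_square algebra_simps)
    qed
    have e2: "(v + s *\<^sub>R w) \<bullet> (v + s *\<^sub>R w) = 1 + s^2 * N"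
      using vv wv unfolding N_def
      by (simp add: inner_add_left inner_add_right inner_commute power2_eq_square)
    show ?thesis using b unfolding e1 e2 C_def by (simp add: algebra_simps)
  qed
  have "N = 0"
  proof (rule ccontr)
    assume "N \<noteq> 0"
    then have Np: "N > 0" unfolding N_def by simp
    define s where "s = N / (\<bar>C\<bar> + 1)"
    have sp: "s > 0" using Np unfolding s_def by simp
    have "2 * s * N \<le> s^2 * C" by (rule key)
    then have "2 * N \<le> s * C" using sp by (simp add: power2_eq_square mult.assoc)
    also have "s * C \<le> s * \<bar>C\<bar>" using sp by (simp add: mult_left_mono)
    also have "s * \<bar>C\<bar> < N" unfolding s_def using Np
      by (simp add: field_simps)
    finally show False using Np by simp
  qed
  then have "w = 0" unfolding N_def by simp
  then have "M *v v = l *\<^sub>R v" unfolding w_def by simp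
  moreover have "v \<noteq> 0" using nv by auto
  ultimately show ?thesis using vS by blast
qed


lemma eig_subspace:
  fixes M :: "real^'n^'n"
  assumes "subspace S"
  shows "subspace {x\<in>S. M *v x = l *\<^sub>R x}"
  using assms unfolding subspace_def
  by (auto simp: matrix_vector_right_distrib matrix_vector_mult_scaleR scaleR_right_distrib)

lemma eig_inv:
  fixes M N :: "real^'n^'n"
  assumes "N ** M = M ** N" "\<And>x. x \<in> S \<Longrightarrow> N *v x \<in> S" "x \<in> {x\<in>S. M *v x = l *\<^sub>R x}"
  shows "N *v x \<in> {x\<in>S. M *v x = l *\<^sub>R x}"
proof -
  have "M *v (N *v x) = N *v (M *v x)" using assms(1) by (simp add: matrix_vector_mul_assoc)
  then show ?thesis using assms by (simp add: matrix_vector_mult_scaleR)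
qed

lemma common_eigen:
  fixes A B C :: "real^'n^'n"
  assumes sA: "transpose A = A" and sB: "transpose B = B" and sC: "transpose C = C"
    and cAB: "A ** B = B ** A" and cBC: "B ** C = C ** B" and cCA: "C ** A = A ** C"
    and S: "subspace S" and nz: "x0 \<in> S" "x0 \<noteq> 0"
    and iA: "\<And>x. x \<in> S \<Longrightarrow> A *v x \<in> S"
    and iB: "\<And>x. x \<in> S \<Longrightarrow> B *v x \<in> S"
    and iC: "\<And>x. x \<in> S \<Longrightarrow> C *v x \<in> S"
  shows "\<exists>v a b c. v \<in> S \<and> v \<noteq> 0 \<and> A *v v = a *\<^sub>R v \<and> B *v v = b *\<^sub>R v \<and> C *v v = c *\<^sub>R v"
proof -
  obtain v1 a where v1: "v1 \<in> S" "v1 \<noteq> 0" "A *v v1 = a *\<^sub>R v1"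
    using eigen_exists[OF sA S nz iA] by blast
  define S1 where "S1 = {x\<in>S. A *v x = a *\<^sub>R x}"
  have S1: "subspace S1" unfolding S1_def by (rule eig_subspace[OF S])
  have iB1: "x \<in> S1 \<Longrightarrow> B *v x \<in> S1" for x unfolding S1_def by (rule eig_inv[OF cAB[symmetric] iB])
  have iC1: "x \<in> S1 \<Longrightarrow> C *v x \<in> S1" for x unfolding S1_def by (rule eig_inv[OF cCA iC])
  obtain v2 b where v2: "v2 \<in> S1" "v2 \<noteq> 0" "B *v v2 = b *\<^sub>R v2"
    using eigen_exists[OF sB S1 _ _ iB1, of v1] v1 unfolding S1_def by blast
  define S2 where "S2 = {x\<in>S1. B *v x = b *\<^sub>R x}"
  have S2: "subspace S2" unfolding S2_def by (rule eig_subspace[OF S1])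
  have iC2: "x \<in> S2 \<Longrightarrow> C *v x \<in> S2" for x unfolding S2_def by (rule eig_inv[OF cBC[symmetric] iC1])
  obtain v3 c where v3: "v3 \<in> S2" "v3 \<noteq> 0" "C *v v3 = c *\<^sub>R v3"
    using eigen_exists[OF sC S2 _ _ iC2, of v2] v2 unfolding S2_def by blast
  show ?thesis using v3 unfolding S2_def S1_def by blast
qed

definition ceig :: "real^'n^'n \<Rightarrow> real^'n^'n \<Rightarrow> real^'n^'n \<Rightarrow> real^'n \<Rightarrow> bool" where
  "ceig A B C v \<longleftrightarrow> (\<exists>a b c. A *v v = a *\<^sub>R v \<and> B *v v = b *\<^sub>R v \<and> C *v v = c *\<^sub>R v)"

lemma eig_orth:
  fixes M :: "real^'n^'n"
  assumes "transpose M = M" "M *v x = a *\<^sub>R x" "orthogonal x y"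
  shows "orthogonal x (M *v y)"
proof -
  have "x \<bullet> (M *v y) = (M *v x) \<bullet> y" using sym_inner[OF assms(1)] by simp
  then show ?thesis using assms unfolding orthogonal_def by simp
qed

lemma basis_induct:
  fixes A B C :: "real^'n^'n"
  assumes sA: "transpose A = A" and sB: "transpose B = B" and sC: "transpose C = C"
    and cAB: "A ** B = B ** A" and cBC: "B ** C = C ** B" and cCA: "C ** A = A ** C"
  shows "k \<le> CARD('n) \<Longrightarrow> \<exists>V. finite V \<and> card V = k \<and> pairwise orthogonal V \<and> (\<forall>v\<in>V. norm v = 1 \<and> ceig A B C v)"
proof (induction k)
  case 0 then show ?case by (intro exI[of _ "{}"]) auto
next
  case (Suc k)
  then obtain V where V: "finite V" "card V = k" "pairwise orthogonal V" "\<forall>v\<in>V. norm v = 1 \<and> ceig A B C v"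
    by auto
  define S where "S = {y. \<forall>x\<in>V. orthogonal x y}"
  have S: "subspace S" unfolding S_def by (rule subspace_orthogonal_to_vectors)
  have "dim V \<le> card V" using V(1) by (intro dim_le_card span_superset) auto
  then have "dim V < DIM(real^'n)" using V(2) Suc.prems by simp
  then obtain x0 where x0: "x0 \<noteq> 0" "\<And>y. y \<in> span V \<Longrightarrow> orthogonal x0 y"
    using orthogonal_to_subspace_exists by blast
  have x0S: "x0 \<in> S" unfolding S_def using x0(2) span_superset orthogonal_commute by blast
  have inv: "M *v y \<in> S" if "y \<in> S" and "M = A \<or> M = B \<or> M = C" for M y
    unfolding S_def
  proof (intro CollectI ballI)
    fix x assume "x \<in> V"
    then obtain a b c where abc: "A *v x = a *\<^sub>R x" "B *v x = b *\<^sub>R x" "C *v x = c *\<^sub>R x"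
      using V(4) unfolding ceig_def by blast
    have "orthogonal x y" using that \<open>x \<in> V\<close> unfolding S_def by blast
    then show "orthogonal x (M *v y)" using that(2) eig_orth[OF sA abc(1)] eig_orth[OF sB abc(2)] eig_orth[OF sC abc(3)]
      by blast
  qed
  obtain w a b c where w: "w \<in> S" "w \<noteq> 0" "A *v w = a *\<^sub>R w" "B *v w = b *\<^sub>R w" "C *v w = c *\<^sub>R w"
    using common_eigen[OF sA sB sC cAB cBC cCA S x0S x0(1)] inv by blast
  define u where "u = w /\<^sub>R norm w"
  have uS: "u \<in> S" unfolding u_def using S w(1) by (simp add: subspace_mul)
  have nu: "norm u = 1" unfolding u_def using w(2) by simp
  have ceu: "ceig A B C u" unfolding ceig_def u_def using w(3-5)
    by (auto simp: matrix_vector_mult_scaleR)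
  have uV: "u \<notin> V"
  proof
    assume "u \<in> V"
    then have "orthogonal u u" using uS unfolding S_def by blast
    then show False using nu by (simp add: orthogonal_self)
  qed
  have "pairwise orthogonal (insert u V)"
    using V(3) uS unfolding S_def by (auto simp: pairwise_insert orthogonal_commute)
  then show ?case using V uV nu ceu
    by (intro exI[of _ "insert u V"]) auto
qed



lemma diagm_right: "(X ** diagm l) $ i $ j = X $ i $ j * l j"
  by (simp add: matrix_matrix_mult_def diagm_def if_distrib if_distribR sum.delta' cong: if_cong)

lemma diagm_left: "(diagm l ** X) $ i $ j = l i * X $ i $ j"
  by (simp add: matrix_matrix_mult_def diagm_def if_distrib if_distribR sum.delta cong: if_cong)

lemma diagm_vec: "(diagm l *v y) $ j = l j * y $ j"
  by (simp add: matrix_vector_mult_def diagm_def if_distrib if_distribR sum.delta cong: if_cong)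

lemma matfun_unique:
  fixes U :: "real^'n^'n"
  assumes U: "orthogonal_matrix U" and M: "M = U ** diagm l ** transpose U"
  shows "matfun f M = U ** diagm (\<lambda>i. f (l i)) ** transpose U"
proof -
  let ?P = "\<lambda>X. \<exists>U l. orthogonal_matrix U \<and> M = U ** diagm l ** transpose U \<and> X = U ** diagm (\<lambda>i. f (l i)) ** transpose U"
  have "?P (U ** diagm (\<lambda>i. f (l i)) ** transpose U)" using U M by blast
  then have "?P (matfun f M)" unfolding matfun_def by (rule someI)
  then obtain V e where V: "orthogonal_matrix V" and Me: "M = V ** diagm e ** transpose V"
    and fM: "matfun f M = V ** diagm (\<lambda>i. f (e i)) ** transpose V" by blast
  have UU: "transpose U ** U = mat 1" "U ** transpose U = mat 1" using U unfolding orthogonal_matrix_def by auto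
  have VV: "transpose V ** V = mat 1" "V ** transpose V = mat 1" using V unfolding orthogonal_matrix_def by auto
  have UU': "X ** transpose U ** U = X" "X ** U ** transpose U = X" for X :: "real^'n^'n"
    using UU by (simp_all flip: matrix_mul_assoc)
  have VV': "X ** transpose V ** V = X" "X ** V ** transpose V = X" for X :: "real^'n^'n"
    using VV by (simp_all flip: matrix_mul_assoc)
  define W where "W = transpose V ** U"
  have "W ** diagm l = transpose V ** M ** U"
    unfolding M W_def by (simp add: matrix_mul_assoc UU')
  also have "\<dots> = diagm e ** W"
    unfolding Me W_def by (simp add: matrix_mul_assoc VV)
  finally have WD: "W ** diagm l = diagm e ** W" .
  have ent: "W $ i $ j * f (l j) = f (e i) * W $ i $ j" for i j
  proof -
    have "W $ i $ j * l j = e i * W $ i $ j"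
      using arg_cong[OF WD, of "\<lambda>X. X $ i $ j"] by (simp add: diagm_right diagm_left)
    then show ?thesis by (cases "W $ i $ j = 0") auto
  qed
  have WF: "W ** diagm (\<lambda>i. f (l i)) = diagm (\<lambda>i. f (e i)) ** W"
    by (simp add: vec_eq_iff diagm_right diagm_left ent)
  have "U ** diagm (\<lambda>i. f (l i)) ** transpose U = V ** (W ** diagm (\<lambda>i. f (l i))) ** transpose U"
    unfolding W_def by (simp add: matrix_mul_assoc VV)
  also have "\<dots> = V ** (diagm (\<lambda>i. f (e i)) ** W) ** transpose U" by (simp only: WF)
  also have "\<dots> = V ** diagm (\<lambda>i. f (e i)) ** transpose V"
    unfolding W_def by (simp add: matrix_mul_assoc UU')
  finally show ?thesis using fM by simp
qed

lemma quad_form: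
  fixes U :: "real^'n^'n"
  shows "((U ** diagm l ** transpose U) *v x) \<bullet> x = (\<Sum>j\<in>UNIV. l j * ((transpose U *v x) $ j)^2)"
proof -
  let ?y = "transpose U *v x"
  have "(U ** diagm l ** transpose U) *v x = U *v (diagm l *v ?y)"
    by (simp only: matrix_vector_mul_assoc matrix_mul_assoc)
  then have "((U ** diagm l ** transpose U) *v x) \<bullet> x = (diagm l *v ?y) \<bullet> ?y"
    using dot_lmul_matrix[of "diagm l *v ?y" "transpose U" x] by simp
  also have "\<dots> = (\<Sum>j\<in>UNIV. l j * (?y $ j)^2)"
    by (simp add: inner_vec_def diagm_vec power2_eq_square mult.assoc)
  finally show ?thesis .
qed

lemma eigcols:
  fixes U M :: "real^'n^'n"
  assumes U: "orthogonal_matrix U" and ev: "\<And>j. M *v column j U = l j *\<^sub>R column j U"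
  shows "M = U ** diagm l ** transpose U"
proof -
  have "M ** U = U ** diagm l"
  proof -
    have "(M ** U) $ i $ j = (U ** diagm l) $ i $ j" for i j
    proof -
      have "(M ** U) $ i $ j = (M *v column j U) $ i"
        by (simp add: matrix_matrix_mult_def matrix_vector_mult_def column_def)
      also have "\<dots> = l j * U $ i $ j" using ev by (simp add: column_def)
      finally show ?thesis by (simp add: diagm_right mult.commute)
    qed
    then show ?thesis by (simp add: vec_eq_iff)
  qed
  have "U ** transpose U = mat 1" using U unfolding orthogonal_matrix_def by auto
  then have "M = M ** U ** transpose U" by (simp flip: matrix_mul_assoc)
  then show ?thesis using \<open>M ** U = U ** diagm l\<close> by simp
qed

lemma simul_diag:
  fixes A B C :: "real^'n^'n"
  assumes sA: "transpose A = A" and sB: "transpose B = B" and sC: "transpose C = C"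
    and cAB: "A ** B = B ** A" and cBC: "B ** C = C ** B" and cCA: "C ** A = A ** C"
  shows "\<exists>U a b c. orthogonal_matrix U \<and> (\<forall>j. A *v column j U = a j *\<^sub>R column j U)
     \<and> (\<forall>j. B *v column j U = b j *\<^sub>R column j U) \<and> (\<forall>j. C *v column j U = c j *\<^sub>R column j U)"
proof -
  obtain V where V: "finite V" "card V = CARD('n)" "pairwise orthogonal V" "\<forall>v\<in>V. norm v = 1 \<and> ceig A B C v"
    using basis_induct[OF assms order_refl] by blast
  obtain g where g: "bij_betw g (UNIV::'n set) V"
    using finite_same_card_bij[of "UNIV::'n set" V] V(1,2) by auto
  define U where "U = (\<chi> i j. g j $ i)"
  have col: "column j U = g j" for j unfolding U_def column_def by simp
  have gV: "g j \<in> V" for j using g by (auto simp: bij_betw_def)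
  have [simp]: "norm (g i) = 1" for i using V(4) gV by blast
  have [simp]: "i \<noteq> j \<Longrightarrow> orthogonal (g i) (g j)" for i j
  proof -
    assume "i \<noteq> j"
    then have "g i \<noteq> g j" using g by (auto simp: bij_betw_def inj_on_def)
    then show ?thesis using V(3) gV unfolding pairwise_def by blast
  qed
  have U: "orthogonal_matrix U"
    by (simp add: orthogonal_matrix_orthonormal_columns col)
  have ce: "ceig A B C (g j)" for j using V(4) gV by blast
  define a where "a j = (SOME a. A *v g j = a *\<^sub>R g j)" for j
  define b where "b j = (SOME b. B *v g j = b *\<^sub>R g j)" for j
  define c where "c j = (SOME c. C *v g j = c *\<^sub>R g j)" for j
  have "A *v g j = a j *\<^sub>R g j" for j unfolding a_def by (rule someI_ex) (use ce[of j] in \<open>auto simp: ceig_def\<close>)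
  moreover have "B *v g j = b j *\<^sub>R g j" for j unfolding b_def by (rule someI_ex) (use ce[of j] in \<open>auto simp: ceig_def\<close>)
  moreover have "C *v g j = c j *\<^sub>R g j" for j unfolding c_def by (rule someI_ex) (use ce[of j] in \<open>auto simp: ceig_def\<close>)
  ultimately show ?thesis using U
    by (intro exI[of _ U] exI[of _ a] exI[of _ b] exI[of _ c]) (simp add: col)
qed



lemma absf:
  fixes U X :: "real^'n^'n"
  assumes U: "orthogonal_matrix U" and ev: "\<And>j. X *v column j U = x j *\<^sub>R column j U"
  shows "matfun f (matabs X) = U ** diagm (\<lambda>j. f \<bar>x j\<bar>) ** transpose U"
proof -
  have "(X ** X) *v column j U = (x j * x j) *\<^sub>R column j U" for j
    by (simp add: matrix_vector_mul_assoc[symmetric] ev matrix_vector_mult_scaleR)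
  then have "X ** X = U ** diagm (\<lambda>j. x j * x j) ** transpose U" by (rule eigcols[OF U])
  then have "matabs X = U ** diagm (\<lambda>j. \<bar>x j\<bar>) ** transpose U"
    unfolding matabs_def using matfun_unique[OF U, of "X ** X" _ sqrt] by simp
  then show ?thesis using matfun_unique[OF U] by simp
qed

theorem theorem11:
  fixes f :: "real \<Rightarrow> real" and A B C :: "real^'n^'n"
  assumes "continuous_on {0..} f"
    and "three_convex_on {0..} f"
    and "mono_on {0..} f"
    and "concave_on {0..} f"
    and "symmetric_matrix A" and "symmetric_matrix B" and "symmetric_matrix C"
    and "A ** B = B ** A" and "B ** C = C ** B" and "C ** A = A ** C"
  shows "loewner_le
     (matfun f (matabs (A + B)) + matfun f (matabs (B + C)) + matfun f (matabs (C + A))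
        + f 0 *\<^sub>R mat 1)
     (matfun f (matabs A) + matfun f (matabs B) + matfun f (matabs C)
        + matfun f (matabs (A + B + C)))"
proof -
  obtain U a b c where U: "orthogonal_matrix U"
    and ea: "\<And>j. A *v column j U = a j *\<^sub>R column j U"
    and eb: "\<And>j. B *v column j U = b j *\<^sub>R column j U"
    and ec: "\<And>j. C *v column j U = c j *\<^sub>R column j U"
    using simul_diag[of A B C] assms(5-10) unfolding symmetric_matrix_def by blast
  have eab: "(A + B) *v column j U = (a j + b j) *\<^sub>R column j U" for j
    by (simp add: matrix_vector_mult_add_rdistrib ea eb scaleR_add_left)
  have ebc: "(B + C) *v column j U = (b j + c j) *\<^sub>R column j U" for j
    by (simp add: matrix_vector_mult_add_rdistrib eb ec scaleR_add_left)
  have eca: "(C + A) *v column j U = (c j + a j) *\<^sub>R column j U" for j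
    by (simp add: matrix_vector_mult_add_rdistrib ea ec scaleR_add_left)
  have eabc: "(A + B + C) *v column j U = (a j + b j + c j) *\<^sub>R column j U" for j
    by (simp add: matrix_vector_mult_add_rdistrib ea eb ec scaleR_add_left)
  have ei: "(f 0 *\<^sub>R mat 1) *v column j U = f 0 *\<^sub>R column j U" for j
    by (simp flip: scaleR_matrix_vector_assoc)
  have I: "f 0 *\<^sub>R mat 1 = U ** diagm (\<lambda>j. f 0) ** transpose U" by (rule eigcols[OF U ei])
  show ?thesis
    unfolding loewner_le_def
  proof
    fix x :: "real^'n"
    define y where "y = transpose U *v x"
    have sc: "(f \<bar>a j + b j\<bar> + f \<bar>b j + c j\<bar> + f \<bar>c j + a j\<bar> + f 0) * (y $ j)^2
       \<le> (f \<bar>a j\<bar> + f \<bar>b j\<bar> + f \<bar>c j\<bar> + f \<bar>a j + b j + c j\<bar>) * (y $ j)^2" for j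
      by (rule mult_right_mono[OF scalar_ineq[OF assms(2-4)]]) simp
    have "(\<Sum>j\<in>UNIV. (f \<bar>a j + b j\<bar> + f \<bar>b j + c j\<bar> + f \<bar>c j + a j\<bar> + f 0) * (y $ j)^2)
       \<le> (\<Sum>j\<in>UNIV. (f \<bar>a j\<bar> + f \<bar>b j\<bar> + f \<bar>c j\<bar> + f \<bar>a j + b j + c j\<bar>) * (y $ j)^2)"
      by (rule sum_mono[OF sc])
    then show "((matfun f (matabs (A + B)) + matfun f (matabs (B + C)) + matfun f (matabs (C + A))
        + f 0 *\<^sub>R mat 1) *v x) \<bullet> x \<le> ((matfun f (matabs A) + matfun f (matabs B) + matfun f (matabs C)
        + matfun f (matabs (A + B + C))) *v x) \<bullet> x"
      unfolding absf[OF U ea] absf[OF U eb] absf[OF U ec] absf[OF U eab] absf[OF U ebc]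
        absf[OF U eca] absf[OF U eabc] I
      by (simp only: matrix_vector_mult_add_rdistrib inner_add_left quad_form y_def[symmetric]
          distrib_right sum.distrib)
  qed
qed


end
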